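(* Let $(M,J)$ be an almost complex manifold and $\nabla$ a connection on $M$, with torsion $T$. Let $S\in T^1_2M$ be the tensor $$S(X,Y)=-(\nabla J)(X,Y)+(\nabla J)(Y,X)+T(JX,Y)-JT(X,Y).$$ Then: (1) $J^{G,\nabla}=\widetilde{J}$ if and only if $S=-\tfrac12 JN_J$; (2) $J^{G,\nabla}=J^{H,\nabla}$ if and only if $T(JX,Y)=T(X,JY)$ for all vector fields $X,Y$; (3) for every almost complex and minimal connection $\nabla$ on $M$, $J^{G,\nabla}=\widetilde{J}=J^{H,\nabla}$.
   Context: $M$ is a smooth real manifold of even dimension $n$, $J$ an almost complex structure on $M$ (a $(1,1)$-tensor field with $J^2=-\mathrm{Id}$), $\pi:T^*M\to M$ the cotangent bundle. Local coordinates $(x_1,\dots,x_n)$ on $M$ induce coordinates $(x_1,\dots,x_n,p_1,\dots,p_n)$ on $T^*M$; Einstein summation is used; $J=J^k_l\,dx^l\otimes\partial_{x_k}$. For a connection $\nabla$: torsion $T(X,Y)=\nabla_XY-\nabla_YX-[X,Y]$; $(\nabla J)(X,Y):=\nabla_X(JY)-J\nabla_XY$; $\widetilde\nabla:=\nabla-\tfrac12T$. $\nabla$ is almost complex if $\nabla_X(JY)=J\nabla_XY$ for all $X,Y$, and minimal if $T=\tfrac14N_J$, where $N_J(X,Y)=[JX,JY]-J[X,JY]-J[JX,Y]-[X,Y]$ is the Nijenhuis tensor. $\nabla$ induces a connection on $T^*M$ by $(\nabla_Xs)(Y)=X(s(Y))-s(\nabla_XY)$. For $\xi\in T^*_xM$,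 the horizontal space is $H^\nabla_\xi=\{d_xs(X): X\in T_xM,\ s$ a section of $T^*M$ with $s(x)=\xi,\ \nabla_Xs=0\}$; then $T_\xi T^*M=H^\nabla_\xi\oplus T^*_xM$ (the second summand being the vertical space), $d_\xi\pi$ is an isomorphism $H^\nabla_\xi\to T_xM$, and $v^\nabla$ denotes projection to $T^*_xM$ along $H^\nabla_\xi$. The generalized horizontal lift $J^{G,\nabla}$ is the almost complex structure on $T^*M$ defined, for $Y=(X,v^\nabla(Y))\in H^\nabla_\xi\oplus T^*_xM$, by $J^{G,\nabla}Y=(JX,{}^tJ(v^\nabla(Y)))$ where $JX:=(d_\xi\pi|_{H^\nabla_\xi})^{-1}(J(x)d_\xi\pi(X))$. Contraction: for $R=R^k_{ij}dx^i\otimes dx^j\otimes\partial_{x_k}\in T^1_2M$, $\gamma(R):=p_kR^k_{ij}\,dx^i\otimes\partial_{p_j}$, a $(1,1)$-tensor on $T^*M$. Let $\theta=p_idx^i$ be the Liouville form, $\omega_{st}=d\theta$, and $\theta(J)=p_kJ^k_ldx^l$; the complete lift $J^c$ is the $(1,1)$-tensor on $T^*M$ defined by $d(\theta(J))=\omega_{st}(J^c\cdot,\cdot)$ (locally, in block form w.r.t. $(x,p)$: upper-left $J^i_j$, upper-right $0$, lower-left $p_k(\partial_{x_j}J^k_i-\partial_{x_i}J^k_j)$, lower-right $J^j_i$). Satô's (complete) lift is $\widetilde J:=J^c-\tfrac12\gamma(JN_J)$. The horizontal lift (Ishihara–Yano) is $J^{H,\nabla}:=J^c+\gamma([\widetilde\nabla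 J])$ with $[\widetilde\nabla J](X,Y)=-(\widetilde\nabla J)(X,Y)+(\widetilde\nabla J)(Y,X)$. *)

theory Defs
  imports "HOL-Analysis.Analysis"
begin

text \<open>Everything is formulated in a coordinate chart: an open set U of real^'n
  (coordinates x_1..x_n indexed by the finite type 'n).  Points of T*M over U are
  pairs (x,p) with x in U and p :: real^'n (p$k = p_k); tangent vectors to T*M
  are pairs (a,b) with a the x-part and b the p-part.\<close>

fun Ck_on :: "nat \<Rightarrow> ('a::real_normed_vector \<Rightarrow> 'b::real_normed_vector) \<Rightarrow> 'a set \<Rightarrow> bool" where
  "Ck_on 0 f U = continuous_on U f"
| "Ck_on (Suc k) f U = (f differentiable_on U \<and>
      (\<forall>v. Ck_on k (\<lambda>x. frechet_derivative f (at x) v) U))"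

definition smooth_on :: "('a::real_normed_vector \<Rightarrow> 'b::real_normed_vector) \<Rightarrow> 'a set \<Rightarrow> bool" where
  "smooth_on f U = (\<forall>k. Ck_on k f U)"

type_synonym 'n vf = "real^'n \<Rightarrow> real^'n"
type_synonym 'n acs = "real^'n \<Rightarrow> real^'n^'n"   \<comment> \<open>(J x)$k$l = J^k_l(x)\<close>
type_synonym 'n conn = "real^'n \<Rightarrow> 'n \<Rightarrow> 'n \<Rightarrow> 'n \<Rightarrow> real"
  \<comment> \<open>\<Gamma> x i j k = \<Gamma>^k_{ij}(x), i.e. nabla_{d_i} d_j = sum_k \<Gamma>^k_{ij} d_k\<close>

definition smooth_conn :: "'n::finite conn \<Rightarrow> (real^'n) set \<Rightarrow> bool" where
  "smooth_conn \<Gamma> U = (\<forall>i j k. smooth_on (\<lambda>x. \<Gamma> x i j k) U)"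

definition almost_complex_structure :: "'n::finite acs \<Rightarrow> (real^'n) set \<Rightarrow> bool" where
  "almost_complex_structure J U = (smooth_on J U \<and> (\<forall>x\<in>U. J x ** J x = - mat 1))"

definition Jf :: "'n::finite acs \<Rightarrow> 'n vf \<Rightarrow> 'n vf" where
  "Jf J X = (\<lambda>x. J x *v X x)"

definition lie_bracket :: "'n::finite vf \<Rightarrow> 'n vf \<Rightarrow> 'n vf" where
  "lie_bracket X Y = (\<lambda>x. frechet_derivative Y (at x) (X x) - frechet_derivative X (at x) (Y x))"

definition cov :: "'n::finite conn \<Rightarrow> 'n vf \<Rightarrow> 'n vf \<Rightarrow> 'n vf" where
  "cov \<Gamma> X Y = (\<lambda>x. frechet_derivative Y (at x) (X x)
     + (\<chi> k. \<Sum>i\<in>UNIV. \<Sum>j\<in>UNIV. \<Gamma> x i j k * X x $ i * Y x $ j))"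

definition torsion :: "'n::finite conn \<Rightarrow> 'n vf \<Rightarrow> 'n vf \<Rightarrow> 'n vf" where
  "torsion \<Gamma> X Y = (\<lambda>x. cov \<Gamma> X Y x - cov \<Gamma> Y X x - lie_bracket X Y x)"

definition nablaJ :: "'n::finite conn \<Rightarrow> 'n acs \<Rightarrow> 'n vf \<Rightarrow> 'n vf \<Rightarrow> 'n vf" where
  "nablaJ \<Gamma> J X Y = (\<lambda>x. cov \<Gamma> X (Jf J Y) x - J x *v cov \<Gamma> X Y x)"

definition nijenhuis :: "'n::finite acs \<Rightarrow> 'n vf \<Rightarrow> 'n vf \<Rightarrow> 'n vf" where
  "nijenhuis J X Y = (\<lambda>x. lie_bracket (Jf J X) (Jf J Y) x - J x *v lie_bracket X (Jf J Y) x
      - J x *v lie_bracket (Jf J X) Y x - lie_bracket X Y x)"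

definition S_tensor :: "'n::finite conn \<Rightarrow> 'n acs \<Rightarrow> 'n vf \<Rightarrow> 'n vf \<Rightarrow> 'n vf" where
  "S_tensor \<Gamma> J X Y = (\<lambda>x. - nablaJ \<Gamma> J X Y x + nablaJ \<Gamma> J Y X x
      + torsion \<Gamma> (Jf J X) Y x - J x *v torsion \<Gamma> X Y x)"

definition cov_tilde :: "'n::finite conn \<Rightarrow> 'n vf \<Rightarrow> 'n vf \<Rightarrow> 'n vf" where
  "cov_tilde \<Gamma> X Y = (\<lambda>x. cov \<Gamma> X Y x - (1/2) *\<^sub>R torsion \<Gamma> X Y x)"

definition nabla_tilde_J :: "'n::finite conn \<Rightarrow> 'n acs \<Rightarrow> 'n vf \<Rightarrow> 'n vf \<Rightarrow> 'n vf" where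
  "nabla_tilde_J \<Gamma> J X Y = (\<lambda>x. cov_tilde \<Gamma> X (Jf J Y) x - J x *v cov_tilde \<Gamma> X Y x)"

definition bracket_nabla_tilde_J :: "'n::finite conn \<Rightarrow> 'n acs \<Rightarrow> 'n vf \<Rightarrow> 'n vf \<Rightarrow> 'n vf" where
  "bracket_nabla_tilde_J \<Gamma> J X Y = (\<lambda>x. - nabla_tilde_J \<Gamma> J X Y x + nabla_tilde_J \<Gamma> J Y X x)"

definition JN :: "'n::finite acs \<Rightarrow> 'n vf \<Rightarrow> 'n vf \<Rightarrow> 'n vf" where
  "JN J X Y = (\<lambda>x. J x *v nijenhuis J X Y x)"

definition smooth_vf :: "'n::finite vf \<Rightarrow> (real^'n) set \<Rightarrow> bool" where
  "smooth_vf X U = smooth_on X U"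

definition almost_complex_conn :: "'n::finite conn \<Rightarrow> 'n acs \<Rightarrow> (real^'n) set \<Rightarrow> bool" where
  "almost_complex_conn \<Gamma> J U = (\<forall>X Y. smooth_vf X U \<longrightarrow> smooth_vf Y U \<longrightarrow>
      (\<forall>x\<in>U. cov \<Gamma> X (Jf J Y) x = J x *v cov \<Gamma> X Y x))"

definition minimal_conn :: "'n::finite conn \<Rightarrow> 'n acs \<Rightarrow> (real^'n) set \<Rightarrow> bool" where
  "minimal_conn \<Gamma> J U = (\<forall>X Y. smooth_vf X U \<longrightarrow> smooth_vf Y U \<longrightarrow>
      (\<forall>x\<in>U. torsion \<Gamma> X Y x = (1/4) *\<^sub>R nijenhuis J X Y x))"

type_synonym 'n tt = "real^'n \<Rightarrow> real^'n \<Rightarrow> ((real^'n) \<times> (real^'n)) \<Rightarrow> ((real^'n) \<times> (real^'n))"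

definition coord_vf :: "'n::finite \<Rightarrow> 'n vf" where
  "coord_vf i = (\<lambda>x. axis i 1)"

text \<open>Contraction gamma(R) = p_k R^k_{ij} dx^i (x) d/dp_j, where
  R^k_{ij}(x) = (R(d_i,d_j)(x))$k.\<close>
definition gamma :: "('n::finite vf \<Rightarrow> 'n vf \<Rightarrow> 'n vf) \<Rightarrow> 'n tt" where
  "gamma R = (\<lambda>x p (a, b). (0, \<chi> j. \<Sum>i\<in>UNIV. \<Sum>k\<in>UNIV.
       p $ k * R (coord_vf i) (coord_vf j) x $ k * a $ i))"

definition dJ :: "'n::finite acs \<Rightarrow> real^'n \<Rightarrow> 'n \<Rightarrow> real^'n^'n" where
  "dJ J x j = frechet_derivative J (at x) (axis j 1)"

text \<open>Complete lift J^c, in the block form given in the paper.\<close>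
definition complete_lift :: "'n::finite acs \<Rightarrow> 'n tt" where
  "complete_lift J = (\<lambda>x p (a, b).
     (J x *v a,
      \<chi> i. (\<Sum>j\<in>UNIV. (\<Sum>k\<in>UNIV. p $ k * (dJ J x j $ k $ i - dJ J x i $ k $ j)) * a $ j)
           + (\<Sum>j\<in>UNIV. J x $ j $ i * b $ j)))"

definition tt_add :: "'n::finite tt \<Rightarrow> 'n tt \<Rightarrow> 'n tt" where
  "tt_add A B = (\<lambda>x p v. A x p v + B x p v)"

definition tt_scale :: "real \<Rightarrow> 'n::finite tt \<Rightarrow> 'n tt" where
  "tt_scale c A = (\<lambda>x p v. c *\<^sub>R A x p v)"

definition sato_lift :: "'n::finite acs \<Rightarrow> 'n tt" where
  "sato_lift J = tt_add (complete_lift J) (tt_scale (-1/2) (gamma (JN J)))"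

definition horizontal_lift :: "'n::finite conn \<Rightarrow> 'n acs \<Rightarrow> 'n tt" where
  "horizontal_lift \<Gamma> J = tt_add (complete_lift J) (gamma (bracket_nabla_tilde_J \<Gamma> J))"

text \<open>Horizontal space of the induced connection on T*M at xi = (x,p): the horizontal
  vector over a in T_xM is d_x s(a) for a section s with s(x)=p and nabla_a s = 0,
  i.e. (a, (p_k \<Gamma>^k_{ij} a^i)_j).\<close>
definition hor :: "'n::finite conn \<Rightarrow> real^'n \<Rightarrow> real^'n \<Rightarrow> real^'n \<Rightarrow> (real^'n) \<times> (real^'n)" where
  "hor \<Gamma> x p a = (a, \<chi> j. \<Sum>i\<in>UNIV. \<Sum>k\<in>UNIV. p $ k * \<Gamma> x i j k * a $ i)"

definition vproj :: "'n::finite conn \<Rightarrow> real^'n \<Rightarrow> real^'n \<Rightarrow> (real^'n) \<times> (real^'n) \<Rightarrow> real^'n" where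
  "vproj \<Gamma> x p Y = snd Y - snd (hor \<Gamma> x p (fst Y))"

text \<open>Generalized horizontal lift J^{G,nabla}: horizontal part (a) goes to hor(J a),
  vertical part alpha goes to tJ alpha = alpha o J.\<close>
definition gen_horizontal_lift :: "'n::finite conn \<Rightarrow> 'n acs \<Rightarrow> 'n tt" where
  "gen_horizontal_lift \<Gamma> J = (\<lambda>x p Y.
     hor \<Gamma> x p (J x *v fst Y) + (0, transpose (J x) *v vproj \<Gamma> x p Y))"

definition tt_eq_on :: "(real^'n) set \<Rightarrow> 'n::finite tt \<Rightarrow> 'n tt \<Rightarrow> bool" where
  "tt_eq_on U A B = (\<forall>x\<in>U. \<forall>p v. A x p v = B x p v)"

end

theory Submission
  imports Defs
begin


lemma mv_bilinear: "bilinear (\<lambda>(A::real^'n::finite^'m::finite) (v::real^'n). A *v v)"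
  unfolding bilinear_def
  by (auto intro!: linearI simp: matrix_vector_mult_add_rdistrib matrix_vector_right_distrib
      scaleR_matrix_vector_assoc matrix_scaleR_vector_ac)

lemma mv_bb: "bounded_bilinear (\<lambda>(A::real^'n::finite^'m::finite) (v::real^'n). A *v v)"
  using bilinear_conv_bounded_bilinear mv_bilinear by blast

lemma has_derivative_mv:
  fixes f :: "real^'k::finite \<Rightarrow> real^'n::finite^'m::finite" and g :: "real^'k \<Rightarrow> real^'n"
  assumes "(f has_derivative f') (at x)" "(g has_derivative g') (at x)"
  shows "((\<lambda>x. f x *v g x) has_derivative (\<lambda>h. f x *v g' h + f' h *v g x)) (at x)"
  using bounded_bilinear.FDERIV[OF mv_bb assms] by simp

lemma Ck_const: "Ck_on k (\<lambda>x. c) U"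
proof (induction k arbitrary: c)
  case 0 then show ?case by simp
next
  case (Suc k)
  have "frechet_derivative (\<lambda>x. c) (at y) = (\<lambda>h. 0)" for y
    by (rule frechet_derivative_at[symmetric]) simp
  then show ?case using Suc by simp
qed

lemma smooth_const: "smooth_vf (\<lambda>x. c) U"
  unfolding smooth_vf_def smooth_on_def using Ck_const by blast

lemma smooth_diff: "smooth_on f U \<Longrightarrow> open U \<Longrightarrow> x \<in> U \<Longrightarrow> f differentiable at x"
  unfolding smooth_on_def
  by (metis Ck_on.simps(2) One_nat_def differentiable_on_eq_differentiable_at)

abbreviation FD where "FD f x \<equiv> frechet_derivative f (at x)"

lemma FD_works: "f differentiable at x \<Longrightarrow> (f has_derivative FD f x) (at x)"
  using frechet_derivative_works by blast

lemma FD_linear: "f differentiable at x \<Longrightarrow> linear (FD f x)"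
  using FD_works has_derivative_linear by blast

lemma FD_Jf':
  fixes J :: "'n::finite acs" and Y :: "'n vf"
  assumes "J differentiable at x" "Y differentiable at x"
  shows "FD (\<lambda>x. J x *v Y x) x h = J x *v FD Y x h + FD J x h *v Y x"
proof -
  have dJ: "(J has_derivative FD J x) (at x)" by (rule FD_works[OF assms(1)])
  have dY: "(Y has_derivative FD Y x) (at x)" by (rule FD_works[OF assms(2)])
  have "((\<lambda>x. J x *v Y x) has_derivative (\<lambda>h. J x *v FD Y x h + FD J x h *v Y x)) (at x)"
    using has_derivative_mv[OF dJ dY] .
  then have "FD (\<lambda>x. J x *v Y x) x = (\<lambda>h. J x *v FD Y x h + FD J x h *v Y x)"
    by (rule frechet_derivative_at[symmetric])
  then show ?thesis by simp
qed

lemma FD_Jf: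
  fixes J :: "'n::finite acs" and Y :: "'n vf"
  assumes "J differentiable at x" "Y differentiable at x"
  shows "FD (Jf J Y) x h = J x *v FD Y x h + FD J x h *v Y x"
  unfolding Jf_def by (rule FD_Jf'[OF assms])

lemma mv_scale: "(A::real^'n::finite^'m::finite) *v (c *\<^sub>R v) = c *\<^sub>R (A *v v)"
  by (simp add: matrix_scaleR_vector_ac scaleR_matrix_vector_assoc)

definition gm :: "'n::finite conn \<Rightarrow> real^'n \<Rightarrow> real^'n \<Rightarrow> real^'n \<Rightarrow> real^'n" where
  "gm \<Gamma> x u v = (\<chi> k. \<Sum>i\<in>UNIV. \<Sum>j\<in>UNIV. \<Gamma> x i j k * u $ i * v $ j)"

lemma gm_add1: "gm \<Gamma> x (u + u') v = gm \<Gamma> x u v + gm \<Gamma> x u' v"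
  by (simp add: gm_def vec_eq_iff algebra_simps sum.distrib)
lemma gm_add2: "gm \<Gamma> x u (v + v') = gm \<Gamma> x u v + gm \<Gamma> x u v'"
  by (simp add: gm_def vec_eq_iff algebra_simps sum.distrib)
lemma gm_scale1: "gm \<Gamma> x (c *\<^sub>R u) v = c *\<^sub>R gm \<Gamma> x u v"
  by (simp add: gm_def vec_eq_iff algebra_simps sum_distrib_left)
lemma gm_scale2: "gm \<Gamma> x u (c *\<^sub>R v) = c *\<^sub>R gm \<Gamma> x u v"
  by (simp add: gm_def vec_eq_iff algebra_simps sum_distrib_left)
lemma gm_neg1: "gm \<Gamma> x (- u) v = - gm \<Gamma> x u v"
  by (simp add: gm_def vec_eq_iff algebra_simps sum_negf)
lemma gm_neg2: "gm \<Gamma> x u (- v) = - gm \<Gamma> x u v"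
  by (simp add: gm_def vec_eq_iff algebra_simps sum_negf)
lemma gm_diff1: "gm \<Gamma> x (u - u') v = gm \<Gamma> x u v - gm \<Gamma> x u' v"
  by (simp add: gm_def vec_eq_iff algebra_simps sum_subtractf)
lemma gm_diff2: "gm \<Gamma> x u (v - v') = gm \<Gamma> x u v - gm \<Gamma> x u v'"
  by (simp add: gm_def vec_eq_iff algebra_simps sum_subtractf)

lemma cov_pt: "cov \<Gamma> X Y x = FD Y x (X x) + gm \<Gamma> x (X x) (Y x)"
  by (simp add: cov_def gm_def)

lemma torsion_pt: "torsion \<Gamma> X Y x = gm \<Gamma> x (X x) (Y x) - gm \<Gamma> x (Y x) (X x)"
  by (simp add: torsion_def cov_pt lie_bracket_def)

definition DJv where "DJv J x u v = FD J x u *v v"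

definition nJ0 where "nJ0 \<Gamma> J x u v = DJv J x u v + gm \<Gamma> x u (J x *v v) - J x *v gm \<Gamma> x u v"

lemma nablaJ_pt:
  assumes "J differentiable at x" "Y differentiable at x"
  shows "nablaJ \<Gamma> J X Y x = nJ0 \<Gamma> J x (X x) (Y x)"
proof -
  have c1: "cov \<Gamma> X (Jf J Y) x = J x *v FD Y x (X x) + FD J x (X x) *v Y x + gm \<Gamma> x (X x) (J x *v Y x)"
    unfolding cov_pt FD_Jf[OF assms] by (simp add: Jf_def)
  show ?thesis unfolding nablaJ_def c1
    by (simp add: nJ0_def DJv_def cov_pt matrix_vector_right_distrib)
qed

definition N0 where "N0 J x u v = DJv J x (J x *v u) v - DJv J x (J x *v v) u
   - J x *v DJv J x u v + J x *v DJv J x v u"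

lemma neg_mv: "(- A) *v (w::real^'n::finite) = - (A *v w)"
  by (simp add: matrix_vector_mult_def vec_eq_iff sum_negf[symmetric])

lemma JJ: fixes J :: "'n::finite acs" shows "J x ** J x = - mat 1 \<Longrightarrow> J x *v (J x *v w) = - w"
proof -
  assume "J x ** J x = - mat 1"
  then have "J x *v (J x *v w) = (- mat 1) *v w" by (simp add: matrix_vector_mul_assoc)
  also have "\<dots> = - (mat 1 *v w)" by (rule neg_mv)
  finally show ?thesis by simp
qed

lemma ab_nij: "(a::'a::ab_group_add) + b - (c + d) - (- e + f - c) - (a - (- g + h)) - (e - g) = b - d - f + h"
  by (simp add: algebra_simps)

lemma nij_pt:
  assumes "J differentiable at x" "X differentiable at x" "Y differentiable at x"
    and "J x ** J x = - mat 1"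
  shows "nijenhuis J X Y x = N0 J x (X x) (Y x)"
proof -
  note J2 = JJ[of J x, OF assms(4)]
  have l1: "lie_bracket (Jf J X) (Jf J Y) x = (J x *v FD Y x (J x *v X x) + FD J x (J x *v X x) *v Y x)
     - (J x *v FD X x (J x *v Y x) + FD J x (J x *v Y x) *v X x)"
    unfolding lie_bracket_def FD_Jf[OF assms(1,3)] FD_Jf[OF assms(1,2)] by (simp add: Jf_def)
  have l2: "lie_bracket X (Jf J Y) x = (J x *v FD Y x (X x) + FD J x (X x) *v Y x) - FD X x (J x *v Y x)"
    unfolding lie_bracket_def FD_Jf[OF assms(1,3)] by (simp add: Jf_def)
  have l3: "lie_bracket (Jf J X) Y x = FD Y x (J x *v X x) - (J x *v FD X x (Y x) + FD J x (Y x) *v X x)"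
    unfolding lie_bracket_def FD_Jf[OF assms(1,2)] by (simp add: Jf_def)
  have l4: "lie_bracket X Y x = FD Y x (X x) - FD X x (Y x)"
    unfolding lie_bracket_def by simp
  show ?thesis
    unfolding nijenhuis_def l1 l2 l3 l4 N0_def DJv_def
    apply (simp only: matrix_vector_right_distrib matrix_vector_mult_diff_distrib J2)
    apply (rule ab_nij)
    done
qed

definition S0 where "S0 \<Gamma> J x u v = - nJ0 \<Gamma> J x u v + nJ0 \<Gamma> J x v u
   + (gm \<Gamma> x (J x *v u) v - gm \<Gamma> x v (J x *v u)) - J x *v (gm \<Gamma> x u v - gm \<Gamma> x v u)"

lemma S_pt:
  assumes "J differentiable at x" "X differentiable at x" "Y differentiable at x"
  shows "S_tensor \<Gamma> J X Y x = S0 \<Gamma> J x (X x) (Y x)"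
  unfolding S_tensor_def S0_def nablaJ_pt[OF assms(1,3)] nablaJ_pt[OF assms(1,2)] torsion_pt
  by (simp only: Jf_def)

definition B0 where "B0 \<Gamma> J x u v =
  - (nJ0 \<Gamma> J x u v - (1/2) *\<^sub>R (gm \<Gamma> x u (J x *v v) - gm \<Gamma> x (J x *v v) u)
      + (1/2) *\<^sub>R (J x *v (gm \<Gamma> x u v - gm \<Gamma> x v u)))
  + (nJ0 \<Gamma> J x v u - (1/2) *\<^sub>R (gm \<Gamma> x v (J x *v u) - gm \<Gamma> x (J x *v u) v)
      + (1/2) *\<^sub>R (J x *v (gm \<Gamma> x v u - gm \<Gamma> x u v)))"

lemma ab2: "(a::'a::ab_group_add) - b - (c - d) = a - c - b + d"
  by (simp add: algebra_simps)

lemma ntJ_pt: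
  assumes "J differentiable at x" "Y differentiable at x"
  shows "nabla_tilde_J \<Gamma> J X Y x = nJ0 \<Gamma> J x (X x) (Y x)
     - (1/2) *\<^sub>R (gm \<Gamma> x (X x) (J x *v Y x) - gm \<Gamma> x (J x *v Y x) (X x))
     + (1/2) *\<^sub>R (J x *v (gm \<Gamma> x (X x) (Y x) - gm \<Gamma> x (Y x) (X x)))"
proof -
  have "nabla_tilde_J \<Gamma> J X Y x = nablaJ \<Gamma> J X Y x - (1/2) *\<^sub>R torsion \<Gamma> X (Jf J Y) x
      + (1/2) *\<^sub>R (J x *v torsion \<Gamma> X Y x)"
    unfolding nabla_tilde_J_def cov_tilde_def nablaJ_def
    by (simp only: matrix_vector_mult_diff_distrib mv_scale ab2)
  then show ?thesis unfolding nablaJ_pt[OF assms] torsion_pt by (simp only: Jf_def)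
qed

lemma B_pt:
  assumes "J differentiable at x" "X differentiable at x" "Y differentiable at x"
  shows "bracket_nabla_tilde_J \<Gamma> J X Y x = B0 \<Gamma> J x (X x) (Y x)"
  unfolding bracket_nabla_tilde_J_def B0_def ntJ_pt[OF assms(1,3)] ntJ_pt[OF assms(1,2)] ..



lemma sum_swap13: "(\<Sum>a\<in>A. \<Sum>b\<in>B. \<Sum>c\<in>C. f a b c) = (\<Sum>c\<in>C. \<Sum>b\<in>B. \<Sum>a\<in>A. f a b c)"
proof -
  have "(\<Sum>a\<in>A. \<Sum>b\<in>B. \<Sum>c\<in>C. f a b c) = (\<Sum>b\<in>B. \<Sum>a\<in>A. \<Sum>c\<in>C. f a b c)" by (rule sum.swap)
  also have "\<dots> = (\<Sum>b\<in>B. \<Sum>c\<in>C. \<Sum>a\<in>A. f a b c)" by (rule sum.cong[OF refl], rule sum.swap)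
  also have "\<dots> = (\<Sum>c\<in>C. \<Sum>b\<in>B. \<Sum>a\<in>A. f a b c)" by (rule sum.swap)
  finally show ?thesis .
qed

lemma hor_inner: "snd (hor \<Gamma> x p u) \<bullet> v = p \<bullet> gm \<Gamma> x u v"
  apply (simp add: hor_def gm_def inner_vec_def sum_distrib_left sum_distrib_right mult_ac)
  apply (subst sum_swap13)
  apply (simp add: mult_ac)
  done

lemma inner_axis1: "(w::real^'n::finite) \<bullet> axis j 1 = w $ j"
  by (simp add: inner_axis)

lemma hor_comp: "snd (hor \<Gamma> x p u) $ j = p \<bullet> gm \<Gamma> x u (axis j 1)"
  using hor_inner[of \<Gamma> x p u "axis j 1"] by (simp add: inner_axis1)

lemma transp_comp: "(transpose A *v w) $ j = w \<bullet> (A *v axis j 1)"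
  by (simp add: matrix_vector_mult_def transpose_def inner_vec_def axis_def mult_ac
     if_distrib cong: if_cong)

lemma lin_expand:
  assumes "linear f"
  shows "f (a::real^'n::finite) = (\<Sum>i\<in>UNIV. a $ i *\<^sub>R f (axis i 1))"
proof -
  have "a = (\<Sum>i\<in>UNIV. a $ i *\<^sub>R axis i 1)"
    using basis_expansion[of a] by (simp add: scalar_mult_eq_scaleR)
  then have "f a = f (\<Sum>i\<in>UNIV. a $ i *\<^sub>R axis i 1)" by simp
  also have "\<dots> = (\<Sum>i\<in>UNIV. a $ i *\<^sub>R f (axis i 1))"
    using assms by (simp add: linear_sum linear_scale)
  finally show ?thesis .
qed

lemma lin_zero:
  assumes "linear f" "\<And>j. f (axis j 1) = 0"
  shows "f (w::real^'n::finite) = 0"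
  using lin_expand[OF assms(1), of w] assms(2) by simp

lemma G_fst: "fst (gen_horizontal_lift \<Gamma> J x p (a,b)) = J x *v a"
  by (simp add: gen_horizontal_lift_def hor_def)

lemma G_snd: "snd (gen_horizontal_lift \<Gamma> J x p (a,b)) $ j =
   p \<bullet> (gm \<Gamma> x (J x *v a) (axis j 1) - gm \<Gamma> x a (J x *v axis j 1)) + (transpose (J x) *v b) $ j"
proof -
  have "snd (gen_horizontal_lift \<Gamma> J x p (a,b)) $ j =
     snd (hor \<Gamma> x p (J x *v a)) $ j + (transpose (J x) *v b) $ j - (transpose (J x) *v snd (hor \<Gamma> x p a)) $ j"
    by (simp add: gen_horizontal_lift_def vproj_def matrix_vector_mult_diff_distrib)
  also have "\<dots> = p \<bullet> gm \<Gamma> x (J x *v a) (axis j 1) + (transpose (J x) *v b) $ j - p \<bullet> gm \<Gamma> x a (J x *v axis j 1)"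
    by (simp only: hor_comp transp_comp hor_inner)
  finally show ?thesis by (simp add: inner_diff_right)
qed

lemma C_fst: "fst (complete_lift J x p (a,b)) = J x *v a"
  by (simp add: complete_lift_def)

lemma C_snd:
  assumes "J differentiable at x"
  shows "snd (complete_lift J x p (a,b)) $ j =
   p \<bullet> (DJv J x a (axis j 1) - DJv J x (axis j 1) a) + (transpose (J x) *v b) $ j"
proof -
  have e1: "FD J x a = (\<Sum>i\<in>UNIV. a $ i *\<^sub>R dJ J x i)"
    unfolding dJ_def by (rule lin_expand[OF FD_linear[OF assms]])
  have t: "(\<Sum>i\<in>UNIV. J x $ i $ j * b $ i) = (transpose (J x) *v b) $ j"
    by (simp add: matrix_vector_mult_def transpose_def)
  have "(\<Sum>i\<in>UNIV. (\<Sum>k\<in>UNIV. p $ k * (dJ J x i $ k $ j - dJ J x j $ k $ i)) * a $ i)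
     = p \<bullet> (DJv J x a (axis j 1) - DJv J x (axis j 1) a)"
    unfolding DJv_def e1 dJ_def[symmetric]
    apply (simp add: inner_vec_def matrix_vector_mult_def axis_def if_distrib cong: if_cong)
    apply (simp add: sum_distrib_left sum_distrib_right algebra_simps sum_subtractf)
    apply (rule trans[OF add.commute])
    apply (rule arg_cong2[where f="(+)"])
     apply (rule sum.swap)+
    done
  then show ?thesis by (simp add: complete_lift_def t)
qed

lemma gamma_eq:
  assumes "\<And>i j. R (coord_vf i) (coord_vf j) x = R0 (axis i 1) (axis j 1)"
    and "\<And>w. linear (\<lambda>u. R0 u w)"
  shows "gamma R x p (a,b) = (0, \<chi> j. p \<bullet> R0 a (axis j 1))"
proof -
  have "(\<Sum>i\<in>UNIV. \<Sum>k\<in>UNIV. p $ k * R0 (axis i 1) (axis j 1) $ k * a $ i) = p \<bullet> R0 a (axis j 1)" for j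
  proof -
    have "R0 a (axis j 1) = (\<Sum>i\<in>UNIV. a $ i *\<^sub>R R0 (axis i 1) (axis j 1))"
      by (rule lin_expand[OF assms(2)])
    then show ?thesis
      apply (simp add: inner_vec_def sum_distrib_left)
      apply (subst sum.swap)
      apply (simp add: mult_ac)
      done
  qed
  then show ?thesis by (simp add: gamma_def assms(1))
qed

lemma DJv_add1: fixes J :: "'n::finite acs" shows "J differentiable at x \<Longrightarrow> DJv J x (u + u') v = DJv J x u v + DJv J x u' v"
  unfolding DJv_def by (simp add: linear_add[OF FD_linear] matrix_vector_mult_add_rdistrib)
lemma DJv_scale1: fixes J :: "'n::finite acs" shows "J differentiable at x \<Longrightarrow> DJv J x (c *\<^sub>R u) v = c *\<^sub>R DJv J x u v"
  unfolding DJv_def by (simp add: linear_scale[OF FD_linear] scaleR_matrix_vector_assoc)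
lemma DJv_add2: fixes J :: "'n::finite acs" shows "DJv J x u (v + v') = DJv J x u v + DJv J x u v'"
  unfolding DJv_def by (simp add: matrix_vector_right_distrib)
lemma DJv_scale2: fixes J :: "'n::finite acs" shows "DJv J x u (c *\<^sub>R v) = c *\<^sub>R DJv J x u (v::real^'n::finite)"
  unfolding DJv_def by (simp add: mv_scale)

lemmas lin_simps = gm_add1 gm_add2 gm_scale1 gm_scale2 DJv_add1 DJv_add2 DJv_scale1 DJv_scale2
  matrix_vector_right_distrib mv_scale

lemma N0_lin1: fixes J :: "'n::finite acs" shows "J differentiable at x \<Longrightarrow> linear (\<lambda>u. J x *v N0 J x u v)"
  by (rule linearI) (simp_all add: N0_def lin_simps matrix_vector_mult_diff_distrib algebra_simps)

lemma N0_lin2: fixes J :: "'n::finite acs" shows "J differentiable at x \<Longrightarrow> linear (\<lambda>v. J x *v N0 J x u v)"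
  by (rule linearI) (simp_all add: N0_def lin_simps matrix_vector_mult_diff_distrib algebra_simps)

lemma lift_iff:
  fixes A B :: "real^'n::finite \<Rightarrow> ((real^'n) \<times> (real^'n)) \<Rightarrow> ((real^'n) \<times> (real^'n))"
  assumes f: "\<And>p a b. fst (A p (a,b)) = fst (B p (a,b))"
    and sA: "\<And>p a b j. snd (A p (a,b)) $ j = p \<bullet> (FA j a :: real^'n) + (c b j :: real)"
    and sB: "\<And>p a b j. snd (B p (a,b)) $ j = p \<bullet> FB j a + c b j"
  shows "(\<forall>(p::real^'n) (v::(real^'n) \<times> (real^'n)). A p v = B p v) \<longleftrightarrow> (\<forall>j a. FA j a = FB j a)"
proof
  assume h: "\<forall>p v. A p v = B p v"
  show "\<forall>j a. FA j a = FB j a"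
  proof (intro allI)
    fix j a
    show "FA j a = FB j a"
    proof (subst vec_eq_iff, intro allI)
      fix k
      have "snd (A (axis k 1) (a,0)) $ j = snd (B (axis k 1) (a,0)) $ j" using h by simp
      then have "axis k 1 \<bullet> FA j a = axis k 1 \<bullet> FB j a" unfolding sA sB by simp
      then show "FA j a $ k = FB j a $ k" by (simp add: inner_axis')
    qed
  qed
next
  assume h: "\<forall>j a. FA j a = FB j a"
  show "\<forall>p v. A p v = B p v"
  proof (intro allI)
    fix p :: "real^'n" and v :: "(real^'n) \<times> (real^'n)"
    obtain a b where v: "v = (a,b)" by (cases v)
    show "A p v = B p v" unfolding v
      by (rule prod_eqI) (use f sA sB h in \<open>auto simp: vec_eq_iff\<close>)
  qed
qed

lemma coord_diff: "coord_vf i differentiable at x"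
  by (simp add: coord_vf_def)

lemma coord_app: "coord_vf i x = axis i 1"
  by (simp add: coord_vf_def)

lemma mult2_vec: "(2::real^'n::finite) * v = (2::real) *\<^sub>R v"
  by (simp add: vec_eq_iff)

lemma B0_lin1: fixes J :: "'n::finite acs" shows "J differentiable at x \<Longrightarrow> linear (\<lambda>u. B0 \<Gamma> J x u v)"
  by (rule linearI) (simp_all add: B0_def nJ0_def lin_simps matrix_vector_mult_diff_distrib gm_diff1 gm_diff2 algebra_simps mult2_vec)

lemma sato_snd:
  fixes J :: "'n::finite acs"
  assumes "J differentiable at x" "J x ** J x = - mat 1"
  shows "snd (sato_lift J x p (a,b)) $ j =
   p \<bullet> (DJv J x a (axis j 1) - DJv J x (axis j 1) a - (1/2) *\<^sub>R (J x *v N0 J x a (axis j 1))) + (transpose (J x) *v b) $ j"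
proof -
  have g: "gamma (JN J) x p (a,b) = (0, \<chi> j. p \<bullet> (J x *v N0 J x a (axis j 1)))"
    by (rule gamma_eq[OF _ N0_lin1[OF assms(1)]])
       (simp add: JN_def nij_pt[OF assms(1) coord_diff coord_diff assms(2)] coord_app)
  show ?thesis
    unfolding sato_lift_def tt_add_def tt_scale_def
    by (simp add: g C_snd[OF assms(1)] inner_diff_right inner_add_right)
qed

lemma sato_fst: "fst (sato_lift J x p (a,b)) = J x *v a"
  by (simp add: sato_lift_def tt_add_def tt_scale_def complete_lift_def gamma_def)

lemma H_snd:
  fixes J :: "'n::finite acs"
  assumes "J differentiable at x"
  shows "snd (horizontal_lift \<Gamma> J x p (a,b)) $ j =
   p \<bullet> (DJv J x a (axis j 1) - DJv J x (axis j 1) a + B0 \<Gamma> J x a (axis j 1)) + (transpose (J x) *v b) $ j"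
proof -
  have g: "gamma (bracket_nabla_tilde_J \<Gamma> J) x p (a,b) = (0, \<chi> j. p \<bullet> B0 \<Gamma> J x a (axis j 1))"
    by (rule gamma_eq[OF _ B0_lin1[OF assms(1)]])
       (simp add: B_pt[OF assms(1) coord_diff coord_diff] coord_app)
  show ?thesis
    unfolding horizontal_lift_def tt_add_def
    by (simp add: g C_snd[OF assms(1)] inner_diff_right inner_add_right)
qed

lemma H_fst: "fst (horizontal_lift \<Gamma> J x p (a,b)) = J x *v a"
  by (simp add: horizontal_lift_def tt_add_def complete_lift_def gamma_def)

definition E1 where "E1 \<Gamma> J x a w = S0 \<Gamma> J x a w + (1/2) *\<^sub>R (J x *v N0 J x a w)"

lemma E1_eq:
  fixes J :: "'n::finite acs"
  shows "(gm \<Gamma> x (J x *v a) w - gm \<Gamma> x a (J x *v w))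
     - (DJv J x a w - DJv J x w a - (1/2) *\<^sub>R (J x *v N0 J x a w)) = E1 \<Gamma> J x a w"
  by (simp add: E1_def S0_def nJ0_def matrix_vector_mult_diff_distrib algebra_simps)

lemma E1_lin: fixes J :: "'n::finite acs" shows "J differentiable at x \<Longrightarrow> linear (E1 \<Gamma> J x a)"
  by (rule linearI) (simp_all add: E1_def S0_def N0_def nJ0_def lin_simps matrix_vector_mult_diff_distrib
     gm_diff1 gm_diff2 algebra_simps mult2_vec)

lemma part1_pt:
  fixes J :: "'n::finite acs"
  assumes "J differentiable at x" "J x ** J x = - mat 1"
  shows "(\<forall>p v. gen_horizontal_lift \<Gamma> J x p v = sato_lift J x p v) \<longleftrightarrow>
         (\<forall>a w. S0 \<Gamma> J x a w = - (1/2) *\<^sub>R (J x *v N0 J x a w))"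
proof -
  have "(\<forall>p v. gen_horizontal_lift \<Gamma> J x p v = sato_lift J x p v) \<longleftrightarrow>
    (\<forall>j a. gm \<Gamma> x (J x *v a) (axis j 1) - gm \<Gamma> x a (J x *v axis j 1) =
       DJv J x a (axis j 1) - DJv J x (axis j 1) a - (1/2) *\<^sub>R (J x *v N0 J x a (axis j 1)))"
    by (rule lift_iff[where c = "\<lambda>b j. (transpose (J x) *v b) $ j"])
       (simp_all only: G_fst sato_fst G_snd sato_snd[OF assms])
  also have "\<dots> \<longleftrightarrow> (\<forall>j a. E1 \<Gamma> J x a (axis j 1) = 0)"
    by (simp only: E1_eq[symmetric] right_minus_eq)
  also have "\<dots> \<longleftrightarrow> (\<forall>a w. E1 \<Gamma> J x a w = 0)"
  proof
    assume h: "\<forall>j a. E1 \<Gamma> J x a (axis j 1) = 0"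
    show "\<forall>a w. E1 \<Gamma> J x a w = 0"
    proof (intro allI)
      fix a w show "E1 \<Gamma> J x a w = 0" by (rule lin_zero[OF E1_lin[OF assms(1)]]) (use h in simp)
    qed
  qed simp
  also have "\<dots> \<longleftrightarrow> (\<forall>a w. S0 \<Gamma> J x a w = - (1/2) *\<^sub>R (J x *v N0 J x a w))"
    by (simp only: E1_def scaleR_minus_left eq_neg_iff_add_eq_0)
  finally show ?thesis .
qed

definition T0 where "T0 \<Gamma> x u v = gm \<Gamma> x u v - gm \<Gamma> x v u"

definition E2 where "E2 \<Gamma> J x a w = (1/2) *\<^sub>R (T0 \<Gamma> x (J x *v a) w - T0 \<Gamma> x a (J x *v w))"

lemma E2_eq:
  fixes J :: "'n::finite acs"
  shows "(gm \<Gamma> x (J x *v a) w - gm \<Gamma> x a (J x *v w))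
     - (DJv J x a w - DJv J x w a + B0 \<Gamma> J x a w) = E2 \<Gamma> J x a w"
  by (simp add: E2_def T0_def B0_def nJ0_def matrix_vector_mult_diff_distrib mv_scale algebra_simps mult2_vec)

lemma E2_lin: fixes J :: "'n::finite acs" shows "linear (E2 \<Gamma> J x a)"
  by (rule linearI) (simp_all add: E2_def T0_def lin_simps matrix_vector_mult_diff_distrib
     gm_diff1 gm_diff2 algebra_simps mult2_vec)

lemma part2_pt:
  fixes J :: "'n::finite acs"
  assumes "J differentiable at x"
  shows "(\<forall>p v. gen_horizontal_lift \<Gamma> J x p v = horizontal_lift \<Gamma> J x p v) \<longleftrightarrow>
         (\<forall>a w. T0 \<Gamma> x (J x *v a) w = T0 \<Gamma> x a (J x *v w))"
proof -
  have "(\<forall>p v. gen_horizontal_lift \<Gamma> J x p v = horizontal_lift \<Gamma> J x p v) \<longleftrightarrow>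
    (\<forall>j a. gm \<Gamma> x (J x *v a) (axis j 1) - gm \<Gamma> x a (J x *v axis j 1) =
       DJv J x a (axis j 1) - DJv J x (axis j 1) a + B0 \<Gamma> J x a (axis j 1))"
    by (rule lift_iff[where c = "\<lambda>b j. (transpose (J x) *v b) $ j"])
       (simp_all only: G_fst H_fst G_snd H_snd[OF assms])
  also have "\<dots> \<longleftrightarrow> (\<forall>j a. E2 \<Gamma> J x a (axis j 1) = 0)"
    by (simp only: E2_eq[symmetric] right_minus_eq)
  also have "\<dots> \<longleftrightarrow> (\<forall>a w. E2 \<Gamma> J x a w = 0)"
  proof
    assume h: "\<forall>j a. E2 \<Gamma> J x a (axis j 1) = 0"
    show "\<forall>a w. E2 \<Gamma> J x a w = 0"
    proof (intro allI)
      fix a w show "E2 \<Gamma> J x a w = 0" by (rule lin_zero[OF E2_lin]) (use h in simp)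
    qed
  qed simp
  also have "\<dots> \<longleftrightarrow> (\<forall>a w. T0 \<Gamma> x (J x *v a) w = T0 \<Gamma> x a (J x *v w))"
    by (simp add: E2_def)
  finally show ?thesis .
qed

lemma acs_pt:
  assumes "open U" "almost_complex_structure J U" "x \<in> U"
  shows "J differentiable at x" "J x ** J x = - mat 1"
  using assms smooth_diff unfolding almost_complex_structure_def by auto

lemma vf_diff: "smooth_vf X U \<Longrightarrow> open U \<Longrightarrow> x \<in> U \<Longrightarrow> X differentiable at x"
  unfolding smooth_vf_def by (rule smooth_diff)

lemma const_diff: "(\<lambda>y. c) differentiable at x"
  by simp

lemma thm1:
  fixes U :: "(real^'n::finite) set" and J :: "'n acs" and \<Gamma> :: "'n conn"
  assumes U: "open U" and acs: "almost_complex_structure J U"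
  shows "tt_eq_on U (gen_horizontal_lift \<Gamma> J) (sato_lift J) \<longleftrightarrow>
            (\<forall>X Y. smooth_vf X U \<longrightarrow> smooth_vf Y U \<longrightarrow>
               (\<forall>x\<in>U. S_tensor \<Gamma> J X Y x = - (1/2) *\<^sub>R JN J X Y x))"
proof -
  have "tt_eq_on U (gen_horizontal_lift \<Gamma> J) (sato_lift J) \<longleftrightarrow>
     (\<forall>x\<in>U. \<forall>a w. S0 \<Gamma> J x a w = - (1/2) *\<^sub>R (J x *v N0 J x a w))"
    unfolding tt_eq_on_def using part1_pt[OF acs_pt[OF U acs]] by blast
  also have "\<dots> \<longleftrightarrow> (\<forall>X Y. smooth_vf X U \<longrightarrow> smooth_vf Y U \<longrightarrow>
               (\<forall>x\<in>U. S_tensor \<Gamma> J X Y x = - (1/2) *\<^sub>R JN J X Y x))"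
  proof
    assume h: "\<forall>x\<in>U. \<forall>a w. S0 \<Gamma> J x a w = - (1/2) *\<^sub>R (J x *v N0 J x a w)"
    show "\<forall>X Y. smooth_vf X U \<longrightarrow> smooth_vf Y U \<longrightarrow>
               (\<forall>x\<in>U. S_tensor \<Gamma> J X Y x = - (1/2) *\<^sub>R JN J X Y x)"
    proof (intro allI impI ballI)
      fix X Y x assume X: "smooth_vf X U" and Y: "smooth_vf Y U" and x: "x \<in> U"
      note d = acs_pt[OF U acs x] vf_diff[OF X U x] vf_diff[OF Y U x]
      show "S_tensor \<Gamma> J X Y x = - (1/2) *\<^sub>R JN J X Y x"
        unfolding S_pt[OF d(1,3,4)] JN_def nij_pt[OF d(1,3,4,2)] using h x by blast
    qed
  next
    assume h: "\<forall>X Y. smooth_vf X U \<longrightarrow> smooth_vf Y U \<longrightarrow>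
               (\<forall>x\<in>U. S_tensor \<Gamma> J X Y x = - (1/2) *\<^sub>R JN J X Y x)"
    show "\<forall>x\<in>U. \<forall>a w. S0 \<Gamma> J x a w = - (1/2) *\<^sub>R (J x *v N0 J x a w)"
    proof (intro allI ballI)
      fix x a w assume x: "x \<in> U"
      note d = acs_pt[OF U acs x]
      have "S_tensor \<Gamma> J (\<lambda>y. a) (\<lambda>y. w) x = - (1/2) *\<^sub>R JN J (\<lambda>y. a) (\<lambda>y. w) x"
        using h smooth_const x by blast
      then show "S0 \<Gamma> J x a w = - (1/2) *\<^sub>R (J x *v N0 J x a w)"
        unfolding S_pt[OF d(1) const_diff const_diff] JN_def nij_pt[OF d(1) const_diff const_diff d(2)] .
    qed
  qed
  finally show ?thesis .
qed

lemma thm2: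
  fixes U :: "(real^'n::finite) set" and J :: "'n acs" and \<Gamma> :: "'n conn"
  assumes U: "open U" and acs: "almost_complex_structure J U"
  shows "tt_eq_on U (gen_horizontal_lift \<Gamma> J) (horizontal_lift \<Gamma> J) \<longleftrightarrow>
            (\<forall>X Y. smooth_vf X U \<longrightarrow> smooth_vf Y U \<longrightarrow>
               (\<forall>x\<in>U. torsion \<Gamma> (Jf J X) Y x = torsion \<Gamma> X (Jf J Y) x))"
proof -
  have "tt_eq_on U (gen_horizontal_lift \<Gamma> J) (horizontal_lift \<Gamma> J) \<longleftrightarrow>
     (\<forall>x\<in>U. \<forall>a w. T0 \<Gamma> x (J x *v a) w = T0 \<Gamma> x a (J x *v w))"
    unfolding tt_eq_on_def using part2_pt[OF acs_pt(1)[OF U acs]] by blast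
  also have "\<dots> \<longleftrightarrow> (\<forall>X Y. smooth_vf X U \<longrightarrow> smooth_vf Y U \<longrightarrow>
               (\<forall>x\<in>U. torsion \<Gamma> (Jf J X) Y x = torsion \<Gamma> X (Jf J Y) x))"
  proof
    assume h: "\<forall>x\<in>U. \<forall>a w. T0 \<Gamma> x (J x *v a) w = T0 \<Gamma> x a (J x *v w)"
    show "\<forall>X Y. smooth_vf X U \<longrightarrow> smooth_vf Y U \<longrightarrow>
               (\<forall>x\<in>U. torsion \<Gamma> (Jf J X) Y x = torsion \<Gamma> X (Jf J Y) x)"
      unfolding torsion_pt Jf_def T0_def[symmetric] using h by blast
  next
    assume h: "\<forall>X Y. smooth_vf X U \<longrightarrow> smooth_vf Y U \<longrightarrow>
               (\<forall>x\<in>U. torsion \<Gamma> (Jf J X) Y x = torsion \<Gamma> X (Jf J Y) x)"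
    show "\<forall>x\<in>U. \<forall>a w. T0 \<Gamma> x (J x *v a) w = T0 \<Gamma> x a (J x *v w)"
    proof (intro allI ballI)
      fix x a w assume x: "x \<in> U"
      have "torsion \<Gamma> (Jf J (\<lambda>y. a)) (\<lambda>y. w) x = torsion \<Gamma> (\<lambda>y. a) (Jf J (\<lambda>y. w)) x"
        using h smooth_const x by blast
      then show "T0 \<Gamma> x (J x *v a) w = T0 \<Gamma> x a (J x *v w)"
        unfolding torsion_pt Jf_def T0_def by simp
    qed
  qed
  finally show ?thesis .
qed

lemma mv_neg: "(A::real^'n::finite^'m::finite) *v (- v) = - (A *v v)"
  by (simp add: matrix_vector_mult_def vec_eq_iff sum_negf[symmetric])

lemma N0_J:
  fixes J :: "'n::finite acs"
  assumes D: "\<And>u v. DJv J x u v = J x *v gm \<Gamma> x u v - gm \<Gamma> x u (J x *v v)"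
    and JJx: "J x ** J x = - mat 1"
  shows "N0 J x (J x *v a) w = - (J x *v N0 J x a w)"
    and "N0 J x a (J x *v w) = - (J x *v N0 J x a w)"
  using JJ[of J x, OF JJx]
  by (simp_all add: N0_def D matrix_vector_mult_diff_distrib matrix_vector_right_distrib neg_mv mv_neg
      gm_neg1 gm_neg2 gm_diff1 gm_diff2 algebra_simps)

lemma thm3:
  fixes U :: "(real^'n::finite) set" and J :: "'n acs" and \<Gamma> :: "'n conn"
  assumes U: "open U" and acs: "almost_complex_structure J U"
    and ac: "almost_complex_conn \<Gamma> J U" and mi: "minimal_conn \<Gamma> J U"
  shows "tt_eq_on U (gen_horizontal_lift \<Gamma> J) (sato_lift J)
            \<and> tt_eq_on U (sato_lift J) (horizontal_lift \<Gamma> J)"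
proof -
  have pt: "(\<forall>p v. gen_horizontal_lift \<Gamma> J x p v = sato_lift J x p v) \<and>
            (\<forall>p v. gen_horizontal_lift \<Gamma> J x p v = horizontal_lift \<Gamma> J x p v)" if x: "x \<in> U" for x
  proof -
    note d = acs_pt[OF U acs x]
    have nz: "nJ0 \<Gamma> J x a w = 0" for a w
    proof -
      have "cov \<Gamma> (\<lambda>y. a) (Jf J (\<lambda>y. w)) x = J x *v cov \<Gamma> (\<lambda>y. a) (\<lambda>y. w) x"
        using ac x smooth_const unfolding almost_complex_conn_def by blast
      then have "nablaJ \<Gamma> J (\<lambda>y. a) (\<lambda>y. w) x = 0" by (simp add: nablaJ_def)
      then show ?thesis unfolding nablaJ_pt[OF d(1) const_diff] .
    qed
    have D: "DJv J x u v = J x *v gm \<Gamma> x u v - gm \<Gamma> x u (J x *v v)" for u v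
      using nz[of u v] unfolding nJ0_def by (simp add: algebra_simps)
    have Tm: "T0 \<Gamma> x a w = (1/4) *\<^sub>R N0 J x a w" for a w
    proof -
      have "torsion \<Gamma> (\<lambda>y. a) (\<lambda>y. w) x = (1/4) *\<^sub>R nijenhuis J (\<lambda>y. a) (\<lambda>y. w) x"
        using mi x smooth_const unfolding minimal_conn_def by blast
      then show ?thesis unfolding torsion_pt nij_pt[OF d(1) const_diff const_diff d(2)] T0_def .
    qed
    note NJ = N0_J[OF D d(2)]
    have S: "S0 \<Gamma> J x a w = - (1/2) *\<^sub>R (J x *v N0 J x a w)" for a w
    proof -
      have "S0 \<Gamma> J x a w = T0 \<Gamma> x (J x *v a) w - J x *v T0 \<Gamma> x a w"
        by (simp add: S0_def T0_def nz)
      also have "\<dots> = - (1/2) *\<^sub>R (J x *v N0 J x a w)"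
        unfolding Tm NJ(1) by (simp add: mv_scale algebra_simps)
      finally show ?thesis .
    qed
    have T: "T0 \<Gamma> x (J x *v a) w = T0 \<Gamma> x a (J x *v w)" for a w
      unfolding Tm NJ ..
    show ?thesis using part1_pt[OF d, of \<Gamma>] part2_pt[OF d(1), of \<Gamma>] S T by blast
  qed
  show ?thesis unfolding tt_eq_on_def using pt by metis
qed

theorem theorem2p4:
  fixes U :: "(real^'n::finite) set" and J :: "'n acs" and \<Gamma> :: "'n conn"
  assumes "open U" and "even CARD('n)"
    and "almost_complex_structure J U"
    and "smooth_conn \<Gamma> U"
  shows "(tt_eq_on U (gen_horizontal_lift \<Gamma> J) (sato_lift J) \<longleftrightarrow>
            (\<forall>X Y. smooth_vf X U \<longrightarrow> smooth_vf Y U \<longrightarrow>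
               (\<forall>x\<in>U. S_tensor \<Gamma> J X Y x = - (1/2) *\<^sub>R JN J X Y x)))
       \<and> (tt_eq_on U (gen_horizontal_lift \<Gamma> J) (horizontal_lift \<Gamma> J) \<longleftrightarrow>
            (\<forall>X Y. smooth_vf X U \<longrightarrow> smooth_vf Y U \<longrightarrow>
               (\<forall>x\<in>U. torsion \<Gamma> (Jf J X) Y x = torsion \<Gamma> X (Jf J Y) x)))
       \<and> (\<forall>\<Gamma>'. smooth_conn \<Gamma>' U \<longrightarrow> almost_complex_conn \<Gamma>' J U \<longrightarrow> minimal_conn \<Gamma>' J U \<longrightarrow>
            tt_eq_on U (gen_horizontal_lift \<Gamma>' J) (sato_lift J)
            \<and> tt_eq_on U (sato_lift J) (horizontal_lift \<Gamma>' J))"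
proof -
  show ?thesis
    using thm1[OF assms(1,3), of \<Gamma>] thm2[OF assms(1,3), of \<Gamma>] thm3[OF assms(1,3)] by blast
qed

end
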